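(* The map $D\mapsto D^{\#}=(D^\dagger)^\ddagger$ is an automorphism of $\Psi\mathfrak D$ of order $4$.
   Context: $\Psi\mathfrak D$ is the algebra of all formal series $\sum_{m=-\infty}^{M}\sum_{k=-\infty}^{K}C_{km}x^k(d/dx)^m$ ($C_{km}\in\mathbb C$, $M,K$ depending on the series) with multiplication determined by $(d/dx)^m x^k=\sum_{j\ge0}\frac{(m)_j(k)_j}{j!}x^{k-j}(d/dx)^{m-j}$, $(a)_j=a(a-1)\cdots(a-j+1)$. The involutive antiautomorphisms $\dagger$ and $\ddagger$ are given by $\bigl(\sum C_{km}x^k(d/dx)^m\bigr)^\dagger=\sum C_{km}(-d/dx)^mx^k$ and $\bigl(\sum C_{km}x^k(d/dx)^m\bigr)^\ddagger=\sum C_{km}x^m(d/dx)^k$. *)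

theory Defs
  imports Complex_Main
begin

text \<open>An element of the algebra PsiD of formal pseudo-differential series
  sum_{m<=M} sum_{k<=K} C k m x^k (d/dx)^m is represented by its coefficient
  function C :: int => int => complex (C k m is the coefficient of x^k (d/dx)^m).\<close>

type_synonym psi = "int \<Rightarrow> int \<Rightarrow> complex"

definition PsiD :: "psi set" where
  "PsiD = {C. \<exists>K M. \<forall>k m. (k > K \<or> m > M) \<longrightarrow> C k m = 0}"

definition ffact_int :: "int \<Rightarrow> nat \<Rightarrow> complex" where
  "ffact_int a j = (\<Prod>i<j. of_int (a - int i))"

definition psi_zero :: psi where "psi_zero = (\<lambda>k m. 0)"
definition psi_one :: psi where "psi_one = (\<lambda>k m. if k = 0 \<and> m = 0 then 1 else 0)"
definition psi_add :: "psi \<Rightarrow> psi \<Rightarrow> psi" where "psi_add A B = (\<lambda>k m. A k m + B k m)"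
definition psi_smult :: "complex \<Rightarrow> psi \<Rightarrow> psi" where "psi_smult c A = (\<lambda>k m. c * A k m)"

text \<open>Multiplication, bilinear extension of
  (x^a d^b)(x^c d^e) = sum_j (b)_j (c)_j / j! x^(a+c-j) d^(b+e-j).
  The coefficient of x^k d^m collects the terms with c = k+j-a, e = m+j-b;
  for elements of PsiD only finitely many triples (a,b,j) contribute.\<close>
definition psi_mult :: "psi \<Rightarrow> psi \<Rightarrow> psi" where
  "psi_mult A B = (\<lambda>k m. \<Sum>(a,b,j) \<in> {(a,b,j). A a b \<noteq> 0 \<and> B (k + int j - a) (m + int j - b) \<noteq> 0}.
      A a b * B (k + int j - a) (m + int j - b) * ffact_int b j * ffact_int (k + int j - a) j / fact j)"

text \<open>dagger: sum C x^k d^m |-> sum C (-d)^m x^k, with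
  (-d)^m x^k = (-1)^m sum_j (m)_j (k)_j / j! x^(k-j) d^(m-j).\<close>
definition psi_dagger :: "psi \<Rightarrow> psi" where
  "psi_dagger C = (\<lambda>k m. \<Sum>j \<in> {j::nat. C (k + int j) (m + int j) \<noteq> 0}.
      C (k + int j) (m + int j) * (if even (m + int j) then 1 else -1)
      * ffact_int (m + int j) j * ffact_int (k + int j) j / fact j)"

definition psi_ddagger :: "psi \<Rightarrow> psi" where
  "psi_ddagger C = (\<lambda>k m. C m k)"

definition psi_sharp :: "psi \<Rightarrow> psi" where
  "psi_sharp D = psi_ddagger (psi_dagger D)"

end

theory Submission
  imports Defs "HOL-Computational_Algebra.Formal_Power_Series" "HOL-Library.Groups_Big_Fun"
begin

lemma altD:
  "(\<Sum>u\<le>N. (-1::int)^(N-u) * int (N choose u) * int ((s+u) choose t))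
     = (if N \<le> t then int (s choose (t-N)) else 0)"
proof (induction N arbitrary: s)
  case 0
  then show ?case by simp
next
  case (Suc N)
  define h where "h u = (-1::int)^(Suc N - u) * int (N choose u) * int ((s+u) choose t)" for u
  have h1: "(\<Sum>u\<le>Suc N. h u) = h 0 + (\<Sum>u\<le>N. h (Suc u))"
    by (rule sum.atMost_Suc_shift)
  have h2: "(\<Sum>u\<le>Suc N. h u) = - (\<Sum>u\<le>N. (-1::int)^(N-u) * int (N choose u) * int ((s+u) choose t))"
  proof -
    have "(\<Sum>u\<le>Suc N. h u) = (\<Sum>u\<le>N. h u) + h (Suc N)" by simp
    also have "h (Suc N) = 0" by (simp add: h_def)
    also have "(\<Sum>u\<le>N. h u) = (\<Sum>u\<le>N. - ((-1::int)^(N-u) * int (N choose u) * int ((s+u) choose t)))"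
      by (rule sum.cong) (auto simp: h_def Suc_diff_le)
    finally show ?thesis by (simp add: sum_negf)
  qed
  have "(\<Sum>u\<le>Suc N. (-1::int)^(Suc N-u) * int (Suc N choose u) * int ((s+u) choose t))
      = (-1)^(Suc N) * int (s choose t) + (\<Sum>u\<le>N. (-1::int)^(N-u) * int (Suc N choose Suc u) * int ((s+Suc u) choose t))"
    by (subst sum.atMost_Suc_shift) simp
  also have "(\<Sum>u\<le>N. (-1::int)^(N-u) * int (Suc N choose Suc u) * int ((s+Suc u) choose t))
     = (\<Sum>u\<le>N. (-1::int)^(N-u) * int (N choose u) * int ((Suc s+u) choose t)) + (\<Sum>u\<le>N. h (Suc u))"
    by (simp add: h_def sum.distrib[symmetric] algebra_simps)
  finally have eq: "(\<Sum>u\<le>Suc N. (-1::int)^(Suc N-u) * int (Suc N choose u) * int ((s+u) choose t))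
     = (if N \<le> t then int (Suc s choose (t-N)) else 0) - (if N \<le> t then int (s choose (t-N)) else 0)"
    using h1 h2 Suc.IH[of s] Suc.IH[of "Suc s"] by (simp add: h_def)
  show ?case
  proof (cases "N < t")
    case True
    then obtain r where "t - N = Suc r" "t - Suc N = r" by (metis Suc_diff_Suc)
    then show ?thesis using True eq by simp
  next
    case False
    then show ?thesis using eq by (cases "N = t") auto
  qed
qed

lemma shift_sum_from:
  fixes F :: "nat \<Rightarrow> 'a::comm_monoid_add"
  assumes "s \<le> n" "\<And>i. i < s \<Longrightarrow> F i = 0"
  shows "(\<Sum>i\<le>n. F i) = (\<Sum>u\<le>n-s. F (s+u))"
proof -
  have "(\<Sum>i\<le>n. F i) = (\<Sum>i\<in>{s..n}. F i)"
    by (rule sum.mono_neutral_right) (use assms in auto)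
  also have "\<dots> = (\<Sum>u\<le>n-s. F (s+u))"
    by (rule sum.reindex_bij_witness[where i="\<lambda>u. s+u" and j="\<lambda>i. i - s"]) (use assms in auto)
  finally show ?thesis .
qed

lemma altE:
  assumes "s \<le> n" "t \<le> n"
  shows "(\<Sum>j\<le>n. (-1::int)^j * int (n choose j) * int ((n-j) choose s) * int ((n-j) choose t))
     = int (n choose s) * int (s choose (n-t))"
proof -
  have "(\<Sum>j\<le>n. (-1::int)^j * int (n choose j) * int ((n-j) choose s) * int ((n-j) choose t))
     = (\<Sum>i\<le>n. (-1::int)^(n-i) * int (n choose i) * int (i choose s) * int (i choose t))"
  proof (rule sum.reindex_bij_witness[where i="\<lambda>i. n-i" and j="\<lambda>j. n-j"])
    fix i assume i: "i \<in> {..n}"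
    then have "n choose (n - i) = n choose i" using binomial_symmetric[of i n] by simp
    moreover have "n - (n - i) = i" using i by simp
    ultimately show "(-1::int)^(n-(n-i)) * int (n choose (n-i)) * int ((n-i) choose s) * int ((n-i) choose t)
      = (-1::int)^i * int (n choose i) * int ((n-i) choose s) * int ((n-i) choose t)" by simp
  qed auto
  also have "\<dots> = (\<Sum>u\<le>n-s. (-1::int)^(n-(s+u)) * int (n choose (s+u)) * int ((s+u) choose s) * int ((s+u) choose t))"
    by (rule shift_sum_from) (use assms in auto)
  also have "\<dots> = (\<Sum>u\<le>n-s. int (n choose s) * ((-1::int)^((n-s)-u) * int ((n-s) choose u) * int ((s+u) choose t)))"
  proof (rule sum.cong)
    fix u assume "u \<in> {..n-s}"
    then have "s + u \<le> n" using assms by auto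
    then have "(n choose (s+u)) * ((s+u) choose s) = (n choose s) * ((n-s) choose u)"
      using choose_mult[of s "s+u" n] by simp
    then have "int (n choose (s+u)) * int ((s+u) choose s) = int (n choose s) * int ((n-s) choose u)"
      by (metis of_nat_mult)
    moreover have "n-(s+u) = (n-s)-u" by simp
    ultimately show "(-1::int)^(n-(s+u)) * int (n choose (s+u)) * int ((s+u) choose s) * int ((s+u) choose t)
       = int (n choose s) * ((-1::int)^((n-s)-u) * int ((n-s) choose u) * int ((s+u) choose t))"
    proof -
      assume a1: "int (n choose (s+u)) * int ((s+u) choose s) = int (n choose s) * int ((n-s) choose u)"
      assume a2: "n-(s+u) = (n-s)-u"
      have "(-1::int)^(n-(s+u)) * int (n choose (s+u)) * int ((s+u) choose s) * int ((s+u) choose t)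
         = (-1::int)^(n-(s+u)) * (int (n choose (s+u)) * int ((s+u) choose s)) * int ((s+u) choose t)"
        by (simp only: mult.assoc)
      also have "\<dots> = (-1::int)^((n-s)-u) * (int (n choose s) * int ((n-s) choose u)) * int ((s+u) choose t)"
        by (simp only: a1 a2)
      finally show ?thesis by (simp only: mult_ac)
    qed
  qed simp
  also have "\<dots> = int (n choose s) * (if n - s \<le> t then int (s choose (t-(n-s))) else 0)"
    by (simp only: sum_distrib_left[symmetric] altD)
  also have "\<dots> = int (n choose s) * int (s choose (n-t))"
  proof (cases "n - s \<le> t")
    case True
    then have "t - (n-s) \<le> s" "s - (t-(n-s)) = n - t" using assms by auto
    then show ?thesis using True binomial_symmetric[of "t-(n-s)" s] by simp
  next
    case False
    then show ?thesis using assms by simp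
  qed
  finally show ?thesis .
qed

definition ffc :: "complex \<Rightarrow> nat \<Rightarrow> complex" where
  "ffc z j = (\<Prod>i<j. z - of_nat i)"

lemma ffact_int_ffc: "ffact_int a j = ffc (of_int a) j"
  unfolding ffact_int_def ffc_def by (rule prod.cong) auto

lemma ffc_add: "ffc z (s+t) = ffc z s * ffc (z - of_nat s) t"
proof (induction t)
  case 0 then show ?case by (simp add: ffc_def)
next
  case (Suc t)
  have "ffc z (s + Suc t) = ffc z (s+t) * (z - of_nat (s+t))"
    by (simp add: ffc_def)
  also have "\<dots> = ffc z s * (ffc (z - of_nat s) t * (z - of_nat s - of_nat t))"
    using Suc by (simp add: algebra_simps)
  also have "ffc (z - of_nat s) t * (z - of_nat s - of_nat t) = ffc (z - of_nat s) (Suc t)"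
    by (simp add: ffc_def)
  finally show ?case .
qed

lemma ffc_gchoose: "ffc z k = fact k * (z gchoose k)"
  by (simp add: ffc_def gbinomial_prod_rev atLeast0LessThan)

lemma ffc_vdm: "ffc (x+y) n = (\<Sum>k\<le>n. of_nat (n choose k) * ffc x k * ffc y (n-k))"
proof -
  have "ffc (x+y) n = fact n * (\<Sum>k\<in>{0..n}. (x gchoose k) * (y gchoose (n - k)))"
    by (simp add: ffc_gchoose gbinomial_Vandermonde)
  also have "\<dots> = (\<Sum>k\<le>n. of_nat (n choose k) * ffc x k * ffc y (n-k))"
    unfolding sum_distrib_left atLeast0AtMost
  proof (rule sum.cong)
    fix k assume "k \<in> {..n}"
    then have k: "k \<le> n" by simp
    show "fact n * ((x gchoose k) * (y gchoose (n - k))) = of_nat (n choose k) * ffc x k * ffc y (n-k)"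
      by (simp add: ffc_gchoose binomial_fact[OF k] field_simps)
  qed simp
  finally show ?thesis .
qed

lemma V2:
  assumes "j \<le> n"
  shows "ffc C j * ffc (A + C - of_nat j) (n-j)
     = (\<Sum>s\<le>n. of_nat ((n-j) choose s) * ffc A s * ffc C (n-s))"
proof -
  have "ffc C j * ffc (A + C - of_nat j) (n-j) = ffc C j * ffc (A + (C - of_nat j)) (n-j)"
    by (simp add: algebra_simps)
  also have "\<dots> = (\<Sum>s\<le>n-j. of_nat ((n-j) choose s) * ffc A s * ffc C (n-s))"
    unfolding ffc_vdm sum_distrib_left
  proof (rule sum.cong)
    fix s assume "s \<in> {..n-j}"
    then have "j + (n - j - s) = n - s" using assms by auto
    then have "ffc C j * ffc (C - of_nat j) (n - j - s) = ffc C (n-s)"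
      by (metis ffc_add)
    then show "ffc C j * (of_nat ((n-j) choose s) * ffc A s * ffc (C - of_nat j) (n - j - s))
       = of_nat ((n-j) choose s) * ffc A s * ffc C (n-s)"
      by (simp add: algebra_simps)
  qed simp
  also have "\<dots> = (\<Sum>s\<le>n. of_nat ((n-j) choose s) * ffc A s * ffc C (n-s))"
    by (rule sum.mono_neutral_left) auto
  finally show ?thesis .
qed

lemma Ec:
  assumes "s \<le> n" "t \<le> n"
  shows "(\<Sum>j\<le>n. (-1)^j * of_nat ((n-j) choose s) * of_nat ((n-j) choose t) / (fact j * fact (n-j)))
     = (if n \<le> s+t then 1/(fact (n-s) * fact (n-t) * fact (s+t-n)) else (0::complex))"
proof -
  have "(\<Sum>j\<le>n. (-1)^j * of_nat ((n-j) choose s) * of_nat ((n-j) choose t) / (fact j * fact (n-j)))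
     = (\<Sum>j\<le>n. of_int ((-1::int)^j * int (n choose j) * int ((n-j) choose s) * int ((n-j) choose t)) / (fact n :: complex))"
  proof (rule sum.cong)
    fix j assume "j \<in> {..n}"
    then have j: "j \<le> n" by simp
    show "(-1)^j * of_nat ((n-j) choose s) * of_nat ((n-j) choose t) / (fact j * fact (n-j))
       = of_int ((-1::int)^j * int (n choose j) * int ((n-j) choose s) * int ((n-j) choose t)) / (fact n :: complex)"
      by (simp add: binomial_fact[OF j] field_simps)
  qed simp
  also have "\<dots> = of_int (\<Sum>j\<le>n. (-1::int)^j * int (n choose j) * int ((n-j) choose s) * int ((n-j) choose t)) / fact n"
    by (simp add: sum_divide_distrib)
  also have "\<dots> = of_nat (n choose s) * of_nat (s choose (n-t)) / fact n"
    using altE[OF assms] by simp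
  also have "\<dots> = (if n \<le> s+t then 1/(fact (n-s) * fact (n-t) * fact (s+t-n)) else (0::complex))"
  proof (cases "n \<le> s+t")
    case True
    then have h: "n - t \<le> s" "s - (n-t) = s+t-n" using assms by auto
    show ?thesis using True
      by (simp add: binomial_fact[OF assms(1)] binomial_fact[OF h(1)] h(2) field_simps)
  next
    case False
    then show ?thesis by simp
  qed
  finally show ?thesis .
qed

lemma IDc:
  fixes A B C E :: complex
  shows "(\<Sum>j\<le>n. (-1)^j * ffc B j * ffc C j / fact j
            * (ffc (B + E - of_nat j) (n-j) * ffc (A + C - of_nat j) (n-j) / fact (n-j)))
   = (\<Sum>(j,p)\<in>{(j,p). j+p \<le> n}. ffc B p * ffc A p / fact p
            * (ffc E (n-j-p) * ffc C (n-j-p) / fact (n-j-p))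
            * ffc (A - of_nat p) j * ffc (E - of_nat (n-j-p)) j / fact j)"
proof -
  define X where "X s t = ffc A s * ffc C (n-s) * ffc E t * ffc B (n-t)" for s t
  define Ecf where "Ecf s t = (if n \<le> s+t then 1/(fact (n-s) * fact (n-t) * fact (s+t-n)) else (0::complex))" for s t
  have "(\<Sum>j\<le>n. (-1)^j * ffc B j * ffc C j / fact j
            * (ffc (B + E - of_nat j) (n-j) * ffc (A + C - of_nat j) (n-j) / fact (n-j)))
     = (\<Sum>j\<le>n. \<Sum>s\<le>n. \<Sum>t\<le>n. (-1)^j * of_nat ((n-j) choose s) * of_nat ((n-j) choose t) / (fact j * fact (n-j)) * X s t)"
  proof (rule sum.cong)
    fix j assume "j \<in> {..n}"
    then have j: "j \<le> n" by simp
    have e1: "ffc C j * ffc (A + C - of_nat j) (n-j) = (\<Sum>s\<le>n. of_nat ((n-j) choose s) * ffc A s * ffc C (n-s))"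
      by (rule V2[OF j])
    have e2: "ffc B j * ffc (E + B - of_nat j) (n-j) = (\<Sum>t\<le>n. of_nat ((n-j) choose t) * ffc E t * ffc B (n-t))"
      by (rule V2[OF j])
    have "(-1)^j * ffc B j * ffc C j / fact j
            * (ffc (B + E - of_nat j) (n-j) * ffc (A + C - of_nat j) (n-j) / fact (n-j))
        = (-1)^j / (fact j * fact (n-j)) * (ffc C j * ffc (A + C - of_nat j) (n-j)) * (ffc B j * ffc (E + B - of_nat j) (n-j))"
      by (simp add: algebra_simps)
    also have "\<dots> = (-1)^j / (fact j * fact (n-j)) * ((\<Sum>s\<le>n. of_nat ((n-j) choose s) * ffc A s * ffc C (n-s)) * (\<Sum>t\<le>n. of_nat ((n-j) choose t) * ffc E t * ffc B (n-t)))"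
      by (simp only: e1 e2 mult.assoc)
    also have "\<dots> = (\<Sum>s\<le>n. \<Sum>t\<le>n. (-1)^j / (fact j * fact (n-j)) * ((of_nat ((n-j) choose s) * ffc A s * ffc C (n-s)) * (of_nat ((n-j) choose t) * ffc E t * ffc B (n-t))))"
      unfolding sum_product by (simp only: sum_distrib_left)
    also have "\<dots> = (\<Sum>s\<le>n. \<Sum>t\<le>n. (-1)^j * of_nat ((n-j) choose s) * of_nat ((n-j) choose t) / (fact j * fact (n-j)) * X s t)"
      by (intro sum.cong refl) (simp add: X_def)
    finally show "(-1)^j * ffc B j * ffc C j / fact j
            * (ffc (B + E - of_nat j) (n-j) * ffc (A + C - of_nat j) (n-j) / fact (n-j))
       = (\<Sum>s\<le>n. \<Sum>t\<le>n. (-1)^j * of_nat ((n-j) choose s) * of_nat ((n-j) choose t) / (fact j * fact (n-j)) * X s t)" .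
  qed simp
  also have "\<dots> = (\<Sum>s\<le>n. \<Sum>j\<le>n. \<Sum>t\<le>n. (-1)^j * of_nat ((n-j) choose s) * of_nat ((n-j) choose t) / (fact j * fact (n-j)) * X s t)"
    by (rule sum.swap)
  also have "\<dots> = (\<Sum>s\<le>n. \<Sum>t\<le>n. \<Sum>j\<le>n. (-1)^j * of_nat ((n-j) choose s) * of_nat ((n-j) choose t) / (fact j * fact (n-j)) * X s t)"
    by (rule sum.cong[OF refl], rule sum.swap)
  also have "\<dots> = (\<Sum>s\<le>n. \<Sum>t\<le>n. X s t * Ecf s t)"
  proof (intro sum.cong refl)
    fix s t assume "s \<in> {..n}" "t \<in> {..n}"
    then have st: "s \<le> n" "t \<le> n" by auto
    show "(\<Sum>j\<le>n. (-1)^j * of_nat ((n-j) choose s) * of_nat ((n-j) choose t) / (fact j * fact (n-j)) * X s t) = X s t * Ecf s t"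
    proof -
      have "(\<Sum>j\<le>n. (-1)^j * of_nat ((n-j) choose s) * of_nat ((n-j) choose t) / (fact j * fact (n-j)) * X s t)
        = (\<Sum>j\<le>n. (-1)^j * of_nat ((n-j) choose s) * of_nat ((n-j) choose t) / (fact j * fact (n-j))) * X s t"
        by (rule sum_distrib_right[symmetric])
      also have "\<dots> = Ecf s t * X s t" by (simp only: Ec[OF st] Ecf_def)
      finally show ?thesis by (simp only: mult.commute)
    qed
  qed
  also have "\<dots> = (\<Sum>(s,t)\<in>{..n}\<times>{..n}. X s t * Ecf s t)"
    by (simp add: sum.cartesian_product)
  also have "\<dots> = (\<Sum>(s,t)\<in>{(s,t). s \<le> n \<and> t \<le> n \<and> n \<le> s+t}. X s t / (fact (n-s) * fact (n-t) * fact (s+t-n)))"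
    by (rule sum.mono_neutral_cong_right) (auto simp: Ecf_def split: if_splits)
  also have "\<dots> = (\<Sum>(j,p)\<in>{(j,p). j+p \<le> n}. ffc B p * ffc A p / fact p
            * (ffc E (n-j-p) * ffc C (n-j-p) / fact (n-j-p))
            * ffc (A - of_nat p) j * ffc (E - of_nat (n-j-p)) j / fact j)"
  proof (rule sum.reindex_bij_witness[where j="\<lambda>(s,t). (s+t-n, n-t)" and i="\<lambda>(j,p). (p+j, n-p)"])
    fix a assume "a \<in> {(s,t). s \<le> n \<and> t \<le> n \<and> n \<le> s+t}"
    then obtain s t where a0: "a = (s,t)" "s \<le> n" "t \<le> n" "n \<le> s+t" by auto
    define j where "j = s+t-n"
    define p where "p = n-t"
    have a: "a = (p+j, n-p)" "j + p \<le> n" "s+t-n = j" "n-t = p" using a0 by (auto simp: j_def p_def)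
    have f1: "ffc A p * ffc (A - of_nat p) j = ffc A (p+j)" by (simp add: ffc_add)
    have f2: "ffc E (n-j-p) * ffc (E - of_nat (n-j-p)) j = ffc E (n-p)"
      using ffc_add[of E "n-j-p" j] a(2) by (simp add: add.commute)
    have "ffc B p * ffc A p / fact p
            * (ffc E (n-j-p) * ffc C (n-j-p) / fact (n-j-p))
            * ffc (A - of_nat p) j * ffc (E - of_nat (n-j-p)) j / fact j
        = (ffc A p * ffc (A - of_nat p) j) * ffc C (n-j-p) * (ffc E (n-j-p) * ffc (E - of_nat (n-j-p)) j) * ffc B p
            / (fact (n-j-p) * fact p * fact j)"
      by (simp add: field_simps)
    also have "\<dots> = ffc A (p+j) * ffc C (n-(p+j)) * ffc E (n-p) * ffc B (n-(n-p)) / (fact (n-(p+j)) * fact (n-(n-p)) * fact (p+j+(n-p)-n))"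
      using a(2) by (simp only: f1 f2) (simp add: add.commute)
    finally have eq: "ffc B p * ffc A p / fact p
            * (ffc E (n-j-p) * ffc C (n-j-p) / fact (n-j-p))
            * ffc (A - of_nat p) j * ffc (E - of_nat (n-j-p)) j / fact j
        = X (p+j) (n-p) / (fact (n-(p+j)) * fact (n-(n-p)) * fact (p+j+(n-p)-n))"
      by (simp add: X_def)
    show "(case (case a of (s, t) \<Rightarrow> (s + t - n, n - t)) of (j, p) \<Rightarrow> ffc B p * ffc A p / fact p
            * (ffc E (n-j-p) * ffc C (n-j-p) / fact (n-j-p))
            * ffc (A - of_nat p) j * ffc (E - of_nat (n-j-p)) j / fact j) =
         (case a of (s, t) \<Rightarrow> X s t / (fact (n - s) * fact (n - t) * fact (s + t - n)))"
      using a0 a eq by simp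
  qed auto
  finally show ?thesis .
qed

definition sg :: "int \<Rightarrow> complex" where "sg t = (if even t then 1 else -1)"

lemma sg_add: "sg (x + y) = sg x * sg y"
  by (auto simp: sg_def)

lemma sg_diff_nat: "sg (x - int j) = sg x * (-1)^j"
  by (auto simp: sg_def even_diff)

lemma ID_int:
  fixes a b c e :: int
  shows "(\<Sum>j\<le>n. ffact_int b j * ffact_int c j / fact j
       * (sg (b+e-int j) * ffact_int (b+e-int j) (n-j) * ffact_int (a+c-int j) (n-j) / fact (n-j)))
   = (\<Sum>(j,p)\<in>{(j,p). j+p \<le> n}. (sg b * ffact_int b p * ffact_int a p / fact p)
       * (sg e * ffact_int e (n-j-p) * ffact_int c (n-j-p) / fact (n-j-p))
       * (ffact_int (a - int p) j * ffact_int (e - int (n-j-p)) j / fact j))"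
proof -
  let ?A = "of_int a :: complex" and ?B = "of_int b :: complex" and ?C = "of_int c :: complex" and ?E = "of_int e :: complex"
  have "(\<Sum>j\<le>n. ffact_int b j * ffact_int c j / fact j
       * (sg (b+e-int j) * ffact_int (b+e-int j) (n-j) * ffact_int (a+c-int j) (n-j) / fact (n-j)))
     = sg b * sg e * (\<Sum>j\<le>n. (-1)^j * ffc ?B j * ffc ?C j / fact j
            * (ffc (?B + ?E - of_nat j) (n-j) * ffc (?A + ?C - of_nat j) (n-j) / fact (n-j)))"
    unfolding sum_distrib_left
    by (intro sum.cong refl) (simp add: ffact_int_ffc sg_diff_nat sg_add)
  also have "\<dots> = sg b * sg e * (\<Sum>(j,p)\<in>{(j,p). j+p \<le> n}. ffc ?B p * ffc ?A p / fact p
            * (ffc ?E (n-j-p) * ffc ?C (n-j-p) / fact (n-j-p))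
            * ffc (?A - of_nat p) j * ffc (?E - of_nat (n-j-p)) j / fact j)"
    by (simp only: IDc)
  also have "\<dots> = (\<Sum>(j,p)\<in>{(j,p). j+p \<le> n}. (sg b * ffact_int b p * ffact_int a p / fact p)
       * (sg e * ffact_int e (n-j-p) * ffact_int c (n-j-p) / fact (n-j-p))
       * (ffact_int (a - int p) j * ffact_int (e - int (n-j-p)) j / fact j))"
    unfolding sum_distrib_left
    by (intro sum.cong refl) (auto simp: ffact_int_ffc)
  finally show ?thesis .
qed

lemma PsiD_bound:
  assumes "C \<in> PsiD"
  obtains K M where "\<And>k m. C k m \<noteq> 0 \<Longrightarrow> k \<le> K \<and> m \<le> M"
proof -
  from assms obtain K M where h: "\<forall>k m. (k > K \<or> m > M) \<longrightarrow> C k m = 0"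
    unfolding PsiD_def by blast
  show ?thesis
  proof (rule that[of K M])
    fix k m assume "C k m \<noteq> 0"
    then show "k \<le> K \<and> m \<le> M" using h[rule_format, of k m] by force
  qed
qed

lemma PsiD_intro:
  assumes "\<And>k m. C k m \<noteq> 0 \<Longrightarrow> k \<le> K \<and> m \<le> M"
  shows "C \<in> PsiD"
  unfolding PsiD_def
proof (intro CollectI exI allI impI)
  fix k m assume "k > K \<or> m > M"
  then show "C k m = 0" using assms[of k m] by force
qed

lemma finite_nat_le_int: "finite {i::nat. int i \<le> z}"
  by (rule finite_subset[of _ "{..nat z}"]) auto

lemma Sum_any_inj_reindex:
  fixes g :: "'b \<Rightarrow> 'c::comm_monoid_add"
  assumes "inj \<phi>" "\<And>x. g (\<phi> x) = h x" "\<And>y. g y \<noteq> 0 \<Longrightarrow> y \<in> range \<phi>"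
  shows "Sum_any h = Sum_any g"
proof -
  have S: "{y. g y \<noteq> 0} = \<phi> ` {x. h x \<noteq> 0}"
    using assms by (auto simp: image_iff) (metis assms(2))
  have "Sum_any g = sum g (\<phi> ` {x. h x \<noteq> 0})"
    unfolding Sum_any.expand_set S ..
  also have "\<dots> = sum (g \<circ> \<phi>) {x. h x \<noteq> 0}"
    by (rule sum.reindex) (use assms(1) in \<open>auto intro: inj_on_subset\<close>)
  also have "\<dots> = Sum_any h"
    unfolding Sum_any.expand_set by (rule sum.cong) (auto simp: assms(2))
  finally show ?thesis by simp
qed

lemma Sum_any_cart:
  fixes g :: "'a \<Rightarrow> 'b \<Rightarrow> 'c::comm_monoid_add"
  assumes "finite SA" "finite SB" "\<And>a b. g a b \<noteq> 0 \<Longrightarrow> a \<in> SA \<and> b \<in> SB"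
  shows "Sum_any (\<lambda>a. Sum_any (g a)) = Sum_any (\<lambda>(a,b). g a b)"
  by (rule Sum_any.cartesian_product[of "SA \<times> SB"]) (use assms in auto)

definition dw :: "int \<Rightarrow> int \<Rightarrow> nat \<Rightarrow> complex" where
  "dw k m j = sg (m + int j) * ffact_int (m + int j) j * ffact_int (k + int j) j / fact j"

definition mw :: "int \<Rightarrow> int \<Rightarrow> nat \<Rightarrow> complex" where
  "mw b c j = ffact_int b j * ffact_int c j / fact j"

lemma dagger_alt: "psi_dagger C k m = (\<Sum>j\<in>{j::nat. C (k + int j) (m + int j) \<noteq> 0}. C (k + int j) (m + int j) * dw k m j)"
  unfolding psi_dagger_def dw_def sg_def by (intro sum.cong refl) (simp add: field_simps)

lemma mult_alt: "psi_mult A B k m = (\<Sum>(a,b,j)\<in>{(a,b,j). A a b \<noteq> 0 \<and> B (k + int j - a) (m + int j - b) \<noteq> 0}.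
      A a b * B (k + int j - a) (m + int j - b) * mw b (k + int j - a) j)"
  unfolding psi_mult_def mw_def by (intro sum.cong refl) (auto simp: field_simps)

lemma dag_fin:
  assumes "C \<in> PsiD"
  shows "finite {j::nat. C (k + int j) (m + int j) \<noteq> 0}"
proof -
  obtain K M where KM: "\<And>k m. C k m \<noteq> 0 \<Longrightarrow> k \<le> K \<and> m \<le> M" using PsiD_bound[OF assms] by blast
  show ?thesis
    by (rule finite_subset[OF _ finite_nat_le_int[of "K - k"]]) (auto dest: KM)
qed

lemma dag_any:
  assumes "C \<in> PsiD"
  shows "psi_dagger C k m * c = Sum_any (\<lambda>j. C (k + int j) (m + int j) * dw k m j * c)"
proof -
  have "Sum_any (\<lambda>j. C (k + int j) (m + int j) * dw k m j * c)
     = sum (\<lambda>j. C (k + int j) (m + int j) * dw k m j * c) {j::nat. C (k + int j) (m + int j) \<noteq> 0}"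
    by (rule Sum_any.expand_superset) (auto simp: dag_fin[OF assms])
  then show ?thesis unfolding dagger_alt sum_distrib_right by simp
qed

lemma mult_fin:
  assumes "A \<in> PsiD" "B \<in> PsiD"
  shows "finite {(a,b,j). A a b \<noteq> 0 \<and> B (k + int j - a) (m + int j - b) \<noteq> 0}"
proof -
  obtain K1 M1 where KM1: "\<And>k m. A k m \<noteq> 0 \<Longrightarrow> k \<le> K1 \<and> m \<le> M1" using PsiD_bound[OF assms(1)] by blast
  obtain K2 M2 where KM2: "\<And>k m. B k m \<noteq> 0 \<Longrightarrow> k \<le> K2 \<and> m \<le> M2" using PsiD_bound[OF assms(2)] by blast
  show ?thesis
  proof (rule finite_subset[of _ "{k-K2..K1} \<times> {m-M2..M1} \<times> {j. int j \<le> K1+K2-k}"])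
    show "finite ({k-K2..K1} \<times> {m-M2..M1} \<times> {j. int j \<le> K1+K2-k})"
      using finite_nat_le_int by auto
  next
    show "{(a,b,j). A a b \<noteq> 0 \<and> B (k + int j - a) (m + int j - b) \<noteq> 0} \<subseteq> {k-K2..K1} \<times> {m-M2..M1} \<times> {j. int j \<le> K1+K2-k}"
    proof (rule subsetI)
      fix x assume "x \<in> {(a,b,j). A a b \<noteq> 0 \<and> B (k + int j - a) (m + int j - b) \<noteq> 0}"
      then obtain a b j where x: "x = (a,b,j)" "A a b \<noteq> 0" "B (k + int j - a) (m + int j - b) \<noteq> 0" by auto
      from KM1[OF x(2)] KM2[OF x(3)]
      show "x \<in> {k-K2..K1} \<times> {m-M2..M1} \<times> {j. int j \<le> K1+K2-k}" using x(1) by auto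
    qed
  qed
qed

lemma mult_any:
  assumes "A \<in> PsiD" "B \<in> PsiD"
  shows "psi_mult A B k m * c = Sum_any (\<lambda>(a,b,j). A a b * B (k + int j - a) (m + int j - b) * mw b (k + int j - a) j * c)"
proof -
  have "Sum_any (\<lambda>(a,b,j). A a b * B (k + int j - a) (m + int j - b) * mw b (k + int j - a) j * c)
     = sum (\<lambda>(a,b,j). A a b * B (k + int j - a) (m + int j - b) * mw b (k + int j - a) j * c)
        {(a,b,j). A a b \<noteq> 0 \<and> B (k + int j - a) (m + int j - b) \<noteq> 0}"
    by (rule Sum_any.expand_superset) (auto simp: mult_fin[OF assms])
  then show ?thesis unfolding mult_alt sum_distrib_right by (simp add: case_prod_beta)
qed

lemma mult_closed:
  assumes "A \<in> PsiD" "B \<in> PsiD"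
  shows "psi_mult A B \<in> PsiD"
proof -
  obtain K1 M1 where KM1: "\<And>k m. A k m \<noteq> 0 \<Longrightarrow> k \<le> K1 \<and> m \<le> M1" using PsiD_bound[OF assms(1)] by blast
  obtain K2 M2 where KM2: "\<And>k m. B k m \<noteq> 0 \<Longrightarrow> k \<le> K2 \<and> m \<le> M2" using PsiD_bound[OF assms(2)] by blast
  show ?thesis
  proof (rule PsiD_intro[of _ "K1+K2" "M1+M2"])
    fix k m assume "psi_mult A B k m \<noteq> 0"
    then obtain x where "x \<in> {(a,b,j). A a b \<noteq> 0 \<and> B (k + int j - a) (m + int j - b) \<noteq> 0}"
      unfolding psi_mult_def by (rule sum.not_neutral_contains_not_neutral)
    then obtain a b j where "A a b \<noteq> 0" "B (k + int j - a) (m + int j - b) \<noteq> 0" by auto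
    from KM1[OF this(1)] KM2[OF this(2)] show "k \<le> K1+K2 \<and> m \<le> M1+M2" by auto
  qed
qed

lemma sharp_alt: "psi_sharp C k m = psi_dagger C m k"
  by (simp add: psi_sharp_def psi_ddagger_def)

lemma sharp_closed:
  assumes "C \<in> PsiD"
  shows "psi_sharp C \<in> PsiD"
proof -
  obtain K M where KM: "\<And>k m. C k m \<noteq> 0 \<Longrightarrow> k \<le> K \<and> m \<le> M" using PsiD_bound[OF assms] by blast
  show ?thesis
  proof (rule PsiD_intro[of _ M K])
    fix k m assume "psi_sharp C k m \<noteq> 0"
    then obtain j where "j \<in> {j::nat. C (m + int j) (k + int j) \<noteq> 0}"
      unfolding sharp_alt psi_dagger_def by (rule sum.not_neutral_contains_not_neutral)
    then have "C (m + int j) (k + int j) \<noteq> 0" by auto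
    from KM[OF this] show "k \<le> M \<and> m \<le> K" by auto
  qed
qed

lemma dag2_any:
  assumes "A \<in> PsiD" "B \<in> PsiD"
  shows "psi_dagger A k1 m1 * psi_dagger B k2 m2 * c
    = Sum_any (\<lambda>(p,q). A (k1 + int p) (m1 + int p) * dw k1 m1 p * (B (k2 + int q) (m2 + int q) * dw k2 m2 q) * c)"
proof -
  let ?SA = "{j::nat. A (k1 + int j) (m1 + int j) \<noteq> 0}"
  let ?SB = "{j::nat. B (k2 + int j) (m2 + int j) \<noteq> 0}"
  have "Sum_any (\<lambda>(p,q). A (k1 + int p) (m1 + int p) * dw k1 m1 p * (B (k2 + int q) (m2 + int q) * dw k2 m2 q) * c)
     = sum (\<lambda>(p,q). A (k1 + int p) (m1 + int p) * dw k1 m1 p * (B (k2 + int q) (m2 + int q) * dw k2 m2 q) * c) (?SA \<times> ?SB)"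
    by (rule Sum_any.expand_superset) (auto simp: dag_fin[OF assms(1)] dag_fin[OF assms(2)])
  also have "\<dots> = (\<Sum>p\<in>?SA. \<Sum>q\<in>?SB. A (k1 + int p) (m1 + int p) * dw k1 m1 p * (B (k2 + int q) (m2 + int q) * dw k2 m2 q) * c)"
    by (simp add: sum.cartesian_product)
  also have "\<dots> = psi_dagger A k1 m1 * psi_dagger B k2 m2 * c"
    unfolding dagger_alt sum_product by (simp only: sum_distrib_right)
  finally show ?thesis ..
qed

definition CLf :: "int \<Rightarrow> int \<Rightarrow> int \<Rightarrow> int \<Rightarrow> nat \<Rightarrow> complex" where
  "CLf a b c e n = (\<Sum>j\<le>n. ffact_int b j * ffact_int c j / fact j
       * (sg (b+e-int j) * ffact_int (b+e-int j) (n-j) * ffact_int (a+c-int j) (n-j) / fact (n-j)))"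

definition CRf :: "int \<Rightarrow> int \<Rightarrow> int \<Rightarrow> int \<Rightarrow> nat \<Rightarrow> complex" where
  "CRf a b c e n = (\<Sum>(j,p)\<in>{(j,p). j+p \<le> n}. (sg b * ffact_int b p * ffact_int a p / fact p)
       * (sg e * ffact_int e (n-j-p) * ffact_int c (n-j-p) / fact (n-j-p))
       * (ffact_int (a - int p) j * ffact_int (e - int (n-j-p)) j / fact j))"

lemma CLf_CRf: "CLf a b c e n = CRf a b c e n"
  unfolding CLf_def CRf_def by (rule ID_int)

lemma LHS_canon:
  assumes A: "A \<in> PsiD" and B: "B \<in> PsiD"
  shows "psi_sharp (psi_mult A B) k m
    = Sum_any (\<lambda>(a,b,n). A a b * B (m + int n - a) (k + int n - b) * CLf a b (m + int n - a) (k + int n - b) n)"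
proof -
  obtain K1 M1 where KM1: "\<And>k m. A k m \<noteq> 0 \<Longrightarrow> k \<le> K1 \<and> m \<le> M1" using PsiD_bound[OF A] by blast
  obtain K2 M2 where KM2: "\<And>k m. B k m \<noteq> 0 \<Longrightarrow> k \<le> K2 \<and> m \<le> M2" using PsiD_bound[OF B] by blast
  let ?NS = "{i::nat. int i \<le> K1+K2-m}"
  define G where "G i = (\<lambda>(a,b,j). A a b * B (m + int i + int j - a) (k + int i + int j - b) * mw b (m + int i + int j - a) j * dw m k i)" for i
  define H2 where "H2 x j = (case x of (a,b,n) \<Rightarrow> if j \<le> n then A a b * B (m + int n - a) (k + int n - b)
      * (mw b (m + int n - a) j * dw m k (n-j)) else 0)" for x and j :: nat
  have "psi_sharp (psi_mult A B) k m = Sum_any (\<lambda>i. psi_mult A B (m + int i) (k + int i) * dw m k i)"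
    using dag_any[OF mult_closed[OF A B], of m k 1] by (simp add: sharp_alt)
  also have "\<dots> = Sum_any (\<lambda>i. Sum_any (G i))"
    unfolding G_def by (simp only: mult_any[OF A B])
  also have "\<dots> = Sum_any (\<lambda>(i,x). G i x)"
  proof (rule Sum_any_cart[where SA="?NS" and SB="{m-K2..K1} \<times> {k-M2..M1} \<times> ?NS"])
    show "finite ?NS" by (rule finite_nat_le_int)
    show "finite ({m-K2..K1} \<times> {k-M2..M1} \<times> ?NS)" using finite_nat_le_int by auto
    fix i x assume "G i x \<noteq> 0"
    then obtain a b j where x: "x = (a,b,j)" "A a b \<noteq> 0" "B (m + int i + int j - a) (k + int i + int j - b) \<noteq> 0"
      unfolding G_def by (cases x) auto
    from KM1[OF x(2)] KM2[OF x(3)] show "i \<in> ?NS \<and> x \<in> {m-K2..K1} \<times> {k-M2..M1} \<times> ?NS"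
      using x(1) by auto
  qed
  also have "\<dots> = Sum_any (\<lambda>(x,j). H2 x j)"
  proof (rule Sum_any_inj_reindex[where \<phi>="\<lambda>(i,(a,b,j)). ((a,b,i+j),j)"])
    show "inj (\<lambda>(i,(a,b,j)). ((a::int,b::int,i+j),j::nat))"
      by (rule injI) auto
    fix y
    show "(case (case y of (i,(a,b,j)) \<Rightarrow> ((a,b,i+j),j)) of (x,j) \<Rightarrow> H2 x j) = (case y of (i,x) \<Rightarrow> G i x)"
    proof -
      obtain i a b j where y: "y = (i,(a,b,j))" by (cases y) auto
      have e1: "m + int (i+j) - a = m + int i + int j - a" "k + int (i+j) - b = k + int i + int j - b" by simp_all
      show ?thesis unfolding y H2_def G_def by (simp only: e1 split if_True le_add2 add_diff_cancel_right') (simp add: mult_ac)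
    qed
  next
    fix y assume "(case y of (x,j) \<Rightarrow> H2 x j) \<noteq> 0"
    then obtain a b n j where y: "y = ((a,b,n),j)" "j \<le> n"
      unfolding H2_def by (auto split: prod.splits if_splits)
    then show "y \<in> range (\<lambda>(i,(a,b,j)). ((a,b,i+j),j))"
      by (auto simp: image_iff intro!: exI[of _ "n-j"])
  qed
  also have "\<dots> = Sum_any (\<lambda>x. Sum_any (H2 x))"
  proof (rule Sum_any_cart[where SA="{m-K2..K1} \<times> {k-M2..M1} \<times> ?NS" and SB="?NS", symmetric])
    show "finite ?NS" by (rule finite_nat_le_int)
    show "finite ({m-K2..K1} \<times> {k-M2..M1} \<times> ?NS)" using finite_nat_le_int by auto
    fix x j assume "H2 x j \<noteq> 0"
    then obtain a b n where x: "x = (a,b,n)" "j \<le> n" "A a b \<noteq> 0" "B (m + int n - a) (k + int n - b) \<noteq> 0"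
      unfolding H2_def by (cases x) (auto split: if_splits)
    from KM1[OF x(3)] KM2[OF x(4)] show "x \<in> {m-K2..K1} \<times> {k-M2..M1} \<times> ?NS \<and> j \<in> ?NS"
      using x(1,2) by auto
  qed
  also have "\<dots> = Sum_any (\<lambda>(a,b,n). A a b * B (m + int n - a) (k + int n - b) * CLf a b (m + int n - a) (k + int n - b) n)"
  proof (rule Sum_any.cong)
    fix x :: "int \<times> int \<times> nat"
    obtain a b n where x: "x = (a,b,n)" by (cases x) auto
    have "Sum_any (H2 x) = sum (H2 x) {..n}"
      by (rule Sum_any.expand_superset) (auto simp: H2_def x split: if_splits)
    also have "\<dots> = A a b * B (m + int n - a) (k + int n - b) * CLf a b (m + int n - a) (k + int n - b) n"
      unfolding CLf_def sum_distrib_left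
    proof (rule sum.cong[OF refl])
      fix j assume "j \<in> {..n}"
      then have j: "j \<le> n" by simp
      have e: "b + (k + int n - b) - int j = k + int (n-j)" "a + (m + int n - a) - int j = m + int (n-j)"
        using j by (simp_all add: of_nat_diff)
      show "H2 x j = A a b * B (m + int n - a) (k + int n - b) * (ffact_int b j * ffact_int (m + int n - a) j / fact j
       * (sg (b + (k + int n - b) - int j) * ffact_int (b + (k + int n - b) - int j) (n-j) * ffact_int (a + (m + int n - a) - int j) (n-j) / fact (n-j)))"
        unfolding e H2_def x using j by (simp add: mw_def dw_def)
    qed
    finally show "Sum_any (H2 x) = (case x of (a,b,n) \<Rightarrow> A a b * B (m + int n - a) (k + int n - b) * CLf a b (m + int n - a) (k + int n - b) n)"
      using x by simp
  qed
  finally show ?thesis .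
qed

lemma finite_tri: "finite {(j,p). j + p \<le> (n::nat)}"
  by (rule finite_subset[of _ "{..n} \<times> {..n}"]) auto

lemma RHS_canon:
  assumes A: "A \<in> PsiD" and B: "B \<in> PsiD"
  shows "psi_mult (psi_sharp A) (psi_sharp B) k m
    = Sum_any (\<lambda>(a,b,n). A a b * B (m + int n - a) (k + int n - b) * CRf a b (m + int n - a) (k + int n - b) n)"
proof -
  obtain K1 M1 where KM1: "\<And>k m. A k m \<noteq> 0 \<Longrightarrow> k \<le> K1 \<and> m \<le> M1" using PsiD_bound[OF A] by blast
  obtain K2 M2 where KM2: "\<And>k m. B k m \<noteq> 0 \<Longrightarrow> k \<le> K2 \<and> m \<le> M2" using PsiD_bound[OF B] by blast
  let ?NS = "{i::nat. int i \<le> K1+K2-m}"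
  define G where "G x y = (case x of (a',b',j) \<Rightarrow> case y of (p,q) \<Rightarrow>
      A (b' + int p) (a' + int p) * dw b' a' p * (B (m + int j - b' + int q) (k + int j - a' + int q)
        * dw (m + int j - b') (k + int j - a') q) * mw b' (k + int j - a') j)"
    for x :: "int \<times> int \<times> nat" and y :: "nat \<times> nat"
  define H2 where "H2 x y = (case x of (a,b,n) \<Rightarrow> case y of (j,p) \<Rightarrow> if j + p \<le> n then
      A a b * B (m + int n - a) (k + int n - b) * ((sg b * ffact_int b p * ffact_int a p / fact p)
       * (sg (k + int n - b) * ffact_int (k + int n - b) (n-j-p) * ffact_int (m + int n - a) (n-j-p) / fact (n-j-p))
       * (ffact_int (a - int p) j * ffact_int ((k + int n - b) - int (n-j-p)) j / fact j)) else 0)"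
    for x :: "int \<times> int \<times> nat" and y :: "nat \<times> nat"
  have "psi_mult (psi_sharp A) (psi_sharp B) k m
     = Sum_any (\<lambda>(a',b',j). psi_sharp A a' b' * psi_sharp B (k + int j - a') (m + int j - b') * mw b' (k + int j - a') j)"
    using mult_any[OF sharp_closed[OF A] sharp_closed[OF B], of k m 1] by simp
  also have "\<dots> = Sum_any (\<lambda>x. Sum_any (G x))"
  proof (rule Sum_any.cong)
    fix x :: "int \<times> int \<times> nat"
    obtain a' b' j where x: "x = (a',b',j)" by (cases x) auto
    show "(case x of (a',b',j) \<Rightarrow> psi_sharp A a' b' * psi_sharp B (k + int j - a') (m + int j - b') * mw b' (k + int j - a') j)
       = Sum_any (G x)"
      unfolding x sharp_alt G_def by (simp only: dag2_any[OF A B] prod.case)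
  qed
  also have "\<dots> = Sum_any (\<lambda>(x,y). G x y)"
  proof (rule Sum_any_cart[where SA="{k-M2..M1} \<times> {m-K2..K1} \<times> ?NS" and SB="?NS \<times> ?NS"])
    show "finite ({k-M2..M1} \<times> {m-K2..K1} \<times> ?NS)" using finite_nat_le_int by auto
    show "finite (?NS \<times> ?NS)" using finite_nat_le_int by auto
    fix x y assume "G x y \<noteq> 0"
    then obtain a' b' j p q where xy: "x = (a',b',j)" "y = (p,q)" "A (b' + int p) (a' + int p) \<noteq> 0"
       "B (m + int j - b' + int q) (k + int j - a' + int q) \<noteq> 0"
      unfolding G_def by (cases x, cases y) auto
    from KM1[OF xy(3)] KM2[OF xy(4)] show "x \<in> {k-M2..M1} \<times> {m-K2..K1} \<times> ?NS \<and> y \<in> ?NS \<times> ?NS"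
      using xy(1,2) by auto
  qed
  also have "\<dots> = Sum_any (\<lambda>(x,y). H2 x y)"
  proof -
    define \<phi> where "\<phi> = (\<lambda>((a'::int,b'::int,j::nat),(p::nat,q::nat)). ((b' + int p, a' + int p, j+p+q),(j,p)))"
    have inj: "inj \<phi>"
      unfolding \<phi>_def by (rule injI) auto
    have eq: "case_prod H2 (\<phi> z) = case_prod G z" for z
    proof -
      obtain a' b' j p q where z: "z = ((a',b',j),(p,q))" by (cases z) auto
      have e1: "j + p + q - j - p = q" by simp
      have e2: "m + int (j+p+q) - (b' + int p) = m + int j - b' + int q"
        "k + int (j+p+q) - (a' + int p) = k + int j - a' + int q"
        "b' + int p - int p = b'"
        "k + int j - a' + int q - int q = k + int j - a'" by simp_all
      show ?thesis
        unfolding z \<phi>_def H2_def G_def prod.case e1 e2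
        by (simp add: dw_def mw_def mult_ac)
    qed
    have rng: "z \<in> range \<phi>" if "case_prod H2 z \<noteq> 0" for z
    proof -
      from that obtain a b n j p where z: "z = ((a,b,n),(j,p))" "j + p \<le> n"
        unfolding H2_def by (auto split: prod.splits if_splits)
      show ?thesis
      proof (rule image_eqI[where x="((b - int p, a - int p, j), (p, n-j-p))"])
        show "z = \<phi> ((b - int p, a - int p, j), (p, n-j-p))" using z unfolding \<phi>_def by simp
      qed simp
    qed
    show ?thesis
      using Sum_any_inj_reindex[where \<phi>=\<phi> and g="case_prod H2" and h="case_prod G", OF inj eq rng] by simp
  qed
  also have "\<dots> = Sum_any (\<lambda>x. Sum_any (H2 x))"
  proof (rule Sum_any_cart[where SA="{m-K2..K1} \<times> {k-M2..M1} \<times> ?NS" and SB="?NS \<times> ?NS", symmetric])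
    show "finite ({m-K2..K1} \<times> {k-M2..M1} \<times> ?NS)" using finite_nat_le_int by auto
    show "finite (?NS \<times> ?NS)" using finite_nat_le_int by auto
    fix x y assume "H2 x y \<noteq> 0"
    then obtain a b n j p where x: "x = (a,b,n)" "y = (j,p)" "j + p \<le> n" "A a b \<noteq> 0" "B (m + int n - a) (k + int n - b) \<noteq> 0"
      unfolding H2_def by (cases x, cases y) (auto split: if_splits)
    from KM1[OF x(4)] KM2[OF x(5)] show "x \<in> {m-K2..K1} \<times> {k-M2..M1} \<times> ?NS \<and> y \<in> ?NS \<times> ?NS"
      using x(1,2,3) by auto
  qed
  also have "\<dots> = Sum_any (\<lambda>(a,b,n). A a b * B (m + int n - a) (k + int n - b) * CRf a b (m + int n - a) (k + int n - b) n)"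
  proof (rule Sum_any.cong)
    fix x :: "int \<times> int \<times> nat"
    obtain a b n where x: "x = (a,b,n)" by (cases x) auto
    have "Sum_any (H2 x) = sum (H2 x) {(j,p). j + p \<le> n}"
      by (rule Sum_any.expand_superset) (auto simp: H2_def x finite_tri split: if_splits)
    also have "\<dots> = A a b * B (m + int n - a) (k + int n - b) * CRf a b (m + int n - a) (k + int n - b) n"
      unfolding CRf_def sum_distrib_left
      by (rule sum.cong[OF refl]) (auto simp: H2_def x)
    finally show "Sum_any (H2 x) = (case x of (a,b,n) \<Rightarrow> A a b * B (m + int n - a) (k + int n - b) * CRf a b (m + int n - a) (k + int n - b) n)"
      using x by simp
  qed
  finally show ?thesis .
qed

lemma sharp_mult:
  assumes "A \<in> PsiD" "B \<in> PsiD"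
  shows "psi_sharp (psi_mult A B) = psi_mult (psi_sharp A) (psi_sharp B)"
  by (intro ext) (simp only: LHS_canon[OF assms] RHS_canon[OF assms] CLf_CRf)

lemma ff_split:
  assumes "p \<le> n"
  shows "ffact_int z n = ffact_int z p * ffact_int (z - int p) (n-p)"
proof -
  have "ffc (of_int z) (p + (n-p)) = ffc (of_int z) p * ffc (of_int z - of_nat p) (n-p)"
    by (rule ffc_add)
  then show ?thesis using assms by (simp add: ffact_int_ffc)
qed

lemma coef2:
  "(\<Sum>p\<le>n. dw (k + int (n-p)) (m + int (n-p)) p * dw m k (n-p)) = (if n = 0 then sg (k+m) else 0)"
proof -
  have "(\<Sum>p\<le>n. dw (k + int (n-p)) (m + int (n-p)) p * dw m k (n-p))
      = (\<Sum>p\<le>n. sg (m + int n) * sg (k + int n) * ffact_int (k + int n) n * ffact_int (m + int n) n / fact n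
           * ((-1)^p * of_nat (n choose p)))"
  proof (rule sum.cong[OF refl])
    fix p assume "p \<in> {..n}"
    then have p: "p \<le> n" by simp
    have e: "m + int (n-p) + int p = m + int n" "k + int (n-p) + int p = k + int n"
      "k + int (n-p) = (k + int n) - int p" "m + int (n-p) = (m + int n) - int p"
      using p by (simp_all add: of_nat_diff)
    show "dw (k + int (n-p)) (m + int (n-p)) p * dw m k (n-p)
      = sg (m + int n) * sg (k + int n) * ffact_int (k + int n) n * ffact_int (m + int n) n / fact n
           * ((-1)^p * of_nat (n choose p))"
      unfolding dw_def e ff_split[OF p, of "k + int n"] ff_split[OF p, of "m + int n"] sg_diff_nat
        binomial_fact[OF p]
      by (simp add: field_simps)
  qed
  also have "\<dots> = sg (m + int n) * sg (k + int n) * ffact_int (k + int n) n * ffact_int (m + int n) n / fact n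
           * (\<Sum>p\<le>n. (-1)^p * of_nat (n choose p))"
    by (simp add: sum_distrib_left)
  also have "\<dots> = (if n = 0 then sg (k+m) else 0)"
    by (cases "n = 0") (auto simp: choose_alternating_sum ffact_int_def sg_def)
  finally show ?thesis .
qed

lemma sharp2:
  assumes C: "C \<in> PsiD"
  shows "psi_sharp (psi_sharp C) k m = sg (k+m) * C k m"
proof -
  obtain K M where KM: "\<And>k m. C k m \<noteq> 0 \<Longrightarrow> k \<le> K \<and> m \<le> M" using PsiD_bound[OF C] by blast
  let ?NS = "{i::nat. int i \<le> K - k}"
  define G where "G i p = C (k + int i + int p) (m + int i + int p) * dw (k + int i) (m + int i) p * dw m k i"
    for i p :: nat
  define H2 where "H2 n p = (if p \<le> n then C (k + int n) (m + int n) * (dw (k + int (n-p)) (m + int (n-p)) p * dw m k (n-p)) else 0)"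
    for n p :: nat
  have "psi_sharp (psi_sharp C) k m = Sum_any (\<lambda>i. psi_sharp C (m + int i) (k + int i) * dw m k i)"
    using dag_any[OF sharp_closed[OF C], of m k 1] by (simp add: sharp_alt)
  also have "\<dots> = Sum_any (\<lambda>i. Sum_any (G i))"
    unfolding G_def sharp_alt by (simp only: dag_any[OF C])
  also have "\<dots> = Sum_any (\<lambda>(i,p). G i p)"
  proof (rule Sum_any_cart[where SA="?NS" and SB="?NS"])
    show "finite ?NS" by (rule finite_nat_le_int)
    show "finite ?NS" by (rule finite_nat_le_int)
    fix i p assume "G i p \<noteq> 0"
    then have "C (k + int i + int p) (m + int i + int p) \<noteq> 0" unfolding G_def by auto
    from KM[OF this] show "i \<in> ?NS \<and> p \<in> ?NS" by auto
  qed
  also have "\<dots> = Sum_any (\<lambda>(n,p). H2 n p)"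
  proof -
    define \<phi> where "\<phi> = (\<lambda>(i::nat,p::nat). (i+p, p))"
    have inj: "inj \<phi>" unfolding \<phi>_def by (rule injI) auto
    have eq: "case_prod H2 (\<phi> z) = case_prod G z" for z
    proof -
      obtain i p where z: "z = (i,p)" by (cases z) auto
      have e: "k + int (i+p) = k + int i + int p" "m + int (i+p) = m + int i + int p" "i + p - p = i" by simp_all
      show ?thesis unfolding z \<phi>_def H2_def G_def prod.case e by (simp add: mult_ac)
    qed
    have rng: "z \<in> range \<phi>" if "case_prod H2 z \<noteq> 0" for z
    proof -
      from that obtain n p where z: "z = (n,p)" "p \<le> n"
        unfolding H2_def by (auto split: prod.splits if_splits)
      show ?thesis
      proof (rule image_eqI[where x="(n-p, p)"])
        show "z = \<phi> (n-p, p)" using z unfolding \<phi>_def by simp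
      qed simp
    qed
    show ?thesis
      using Sum_any_inj_reindex[where \<phi>=\<phi> and g="case_prod H2" and h="case_prod G", OF inj eq rng] by simp
  qed
  also have "\<dots> = Sum_any (\<lambda>n. Sum_any (H2 n))"
  proof (rule Sum_any_cart[where SA="?NS" and SB="?NS", symmetric])
    show "finite ?NS" by (rule finite_nat_le_int)
    show "finite ?NS" by (rule finite_nat_le_int)
    fix n p assume "H2 n p \<noteq> 0"
    then have "p \<le> n" "C (k + int n) (m + int n) \<noteq> 0" unfolding H2_def by (auto split: if_splits)
    from KM[OF this(2)] this(1) show "n \<in> ?NS \<and> p \<in> ?NS" by auto
  qed
  also have "\<dots> = Sum_any (\<lambda>n::nat. if n = 0 then sg (k+m) * C k m else 0)"
  proof -
    have "Sum_any (H2 n) = (if n = 0 then sg (k+m) * C k m else 0)" for n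
    proof -
    have "Sum_any (H2 n) = sum (H2 n) {..n}"
      by (rule Sum_any.expand_superset) (auto simp: H2_def split: if_splits)
    also have "\<dots> = C (k + int n) (m + int n) * (\<Sum>p\<le>n. dw (k + int (n-p)) (m + int (n-p)) p * dw m k (n-p))"
      unfolding sum_distrib_left by (rule sum.cong) (auto simp: H2_def)
    also have "\<dots> = (if n = 0 then sg (k+m) * C k m else 0)"
      unfolding coef2 by simp
    finally show "Sum_any (H2 n) = (if n = 0 then sg (k+m) * C k m else 0)" .
    qed
    then show ?thesis by (simp only:)
  qed
  also have "\<dots> = sg (k+m) * C k m"
    by simp
  finally show ?thesis .
qed

lemma add_closed:
  assumes A: "A \<in> PsiD" and B: "B \<in> PsiD"
  shows "psi_add A B \<in> PsiD"
proof -
  obtain K1 M1 where KM1: "\<And>k m. A k m \<noteq> 0 \<Longrightarrow> k \<le> K1 \<and> m \<le> M1" using PsiD_bound[OF A] by blast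
  obtain K2 M2 where KM2: "\<And>k m. B k m \<noteq> 0 \<Longrightarrow> k \<le> K2 \<and> m \<le> M2" using PsiD_bound[OF B] by blast
  show ?thesis
  proof (rule PsiD_intro[of _ "max K1 K2" "max M1 M2"])
    fix k m assume "psi_add A B k m \<noteq> 0"
    then have "A k m \<noteq> 0 \<or> B k m \<noteq> 0" unfolding psi_add_def by auto
    then show "k \<le> max K1 K2 \<and> m \<le> max M1 M2" using KM1 KM2 by force
  qed
qed

lemma smult_closed:
  assumes A: "A \<in> PsiD"
  shows "psi_smult c A \<in> PsiD"
proof -
  obtain K1 M1 where KM1: "\<And>k m. A k m \<noteq> 0 \<Longrightarrow> k \<le> K1 \<and> m \<le> M1" using PsiD_bound[OF A] by blast
  show ?thesis
  proof (rule PsiD_intro[of _ K1 M1])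
    fix k m assume "psi_smult c A k m \<noteq> 0"
    then have "A k m \<noteq> 0" unfolding psi_smult_def by auto
    then show "k \<le> K1 \<and> m \<le> M1" using KM1 by blast
  qed
qed

lemma one_in: "psi_one \<in> PsiD"
  by (rule PsiD_intro[of _ 0 0]) (auto simp: psi_one_def split: if_splits)

lemma sharp_any:
  assumes "C \<in> PsiD"
  shows "psi_sharp C k m = Sum_any (\<lambda>j. C (m + int j) (k + int j) * dw m k j)"
  using dag_any[OF assms, of m k 1] by (simp add: sharp_alt)

lemma sharp_fin:
  assumes "C \<in> PsiD"
  shows "finite {j. C (m + int j) (k + int j) * dw m k j \<noteq> 0}"
  by (rule finite_subset[OF _ dag_fin[OF assms, of m k]]) auto

lemma sharp_add:
  assumes A: "A \<in> PsiD" and B: "B \<in> PsiD"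
  shows "psi_sharp (psi_add A B) = psi_add (psi_sharp A) (psi_sharp B)"
proof (intro ext)
  fix k m
  have "psi_sharp (psi_add A B) k m = Sum_any (\<lambda>j. A (m + int j) (k + int j) * dw m k j + B (m + int j) (k + int j) * dw m k j)"
    unfolding sharp_any[OF add_closed[OF A B]] by (simp add: psi_add_def algebra_simps)
  also have "\<dots> = Sum_any (\<lambda>j. A (m + int j) (k + int j) * dw m k j) + Sum_any (\<lambda>j. B (m + int j) (k + int j) * dw m k j)"
    by (rule Sum_any.distrib[OF sharp_fin[OF A] sharp_fin[OF B]])
  also have "\<dots> = psi_add (psi_sharp A) (psi_sharp B) k m"
    unfolding psi_add_def sharp_any[OF A] sharp_any[OF B] ..
  finally show "psi_sharp (psi_add A B) k m = psi_add (psi_sharp A) (psi_sharp B) k m" .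
qed

lemma sharp_smult:
  assumes A: "A \<in> PsiD"
  shows "psi_sharp (psi_smult c A) = psi_smult c (psi_sharp A)"
proof (intro ext)
  fix k m
  have "psi_sharp (psi_smult c A) k m = Sum_any (\<lambda>j. c * (A (m + int j) (k + int j) * dw m k j))"
    unfolding sharp_any[OF smult_closed[OF A]] by (simp add: psi_smult_def algebra_simps)
  also have "\<dots> = c * Sum_any (\<lambda>j. A (m + int j) (k + int j) * dw m k j)"
    by (rule Sum_any_right_distrib[symmetric, OF sharp_fin[OF A]])
  also have "\<dots> = psi_smult c (psi_sharp A) k m"
    unfolding psi_smult_def sharp_any[OF A] ..
  finally show "psi_sharp (psi_smult c A) k m = psi_smult c (psi_sharp A) k m" .
qed

lemma ffact_int_zero: "j > 0 \<Longrightarrow> ffact_int 0 j = 0"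
  unfolding ffact_int_def by (rule prod_zero) auto

lemma sharp_one: "psi_sharp psi_one = psi_one"
proof (intro ext)
  fix k m
  have "psi_sharp psi_one k m = Sum_any (\<lambda>j::nat. if j = 0 then psi_one k m else 0)"
    unfolding sharp_any[OF one_in]
  proof (rule Sum_any.cong)
    fix j :: nat
    show "psi_one (m + int j) (k + int j) * dw m k j = (if j = 0 then psi_one k m else 0)"
    proof (cases "j = 0")
      case True
      then show ?thesis by (simp add: psi_one_def dw_def sg_def ffact_int_def)
    next
      case False
      then show ?thesis
        by (auto simp: psi_one_def dw_def ffact_int_zero)
    qed
  qed
  also have "\<dots> = psi_one k m" by simp
  finally show "psi_sharp psi_one k m = psi_one k m" .
qed

lemma sharp2_fun:
  assumes "C \<in> PsiD"
  shows "psi_sharp (psi_sharp C) = (\<lambda>k m. sg (k+m) * C k m)"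
  using sharp2[OF assms] by (intro ext) simp

lemma sg_sq: "sg x * sg x = 1"
  by (simp add: sg_def)

lemma sharp4:
  assumes "C \<in> PsiD"
  shows "psi_sharp (psi_sharp (psi_sharp (psi_sharp C))) = C"
proof -
  have E: "psi_sharp (psi_sharp C) \<in> PsiD" using sharp_closed[OF sharp_closed[OF assms]] .
  have "psi_sharp (psi_sharp (psi_sharp (psi_sharp C))) = (\<lambda>k m. sg (k+m) * psi_sharp (psi_sharp C) k m)"
    by (rule sharp2_fun[OF E])
  also have "\<dots> = C"
    by (intro ext) (simp add: sharp2[OF assms] mult.assoc[symmetric] sg_sq)
  finally show ?thesis .
qed

lemma sharp_10:
  assumes "\<And>a b. C a b \<noteq> 0 \<Longrightarrow> b = 0"
  shows "psi_sharp C 1 0 = 0"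
proof -
  have "{j::nat. C (0 + int j) (1 + int j) \<noteq> 0} = {}" using assms by force
  then show ?thesis unfolding sharp_alt psi_dagger_def by (simp only: sum.empty)
qed

lemma neq_at: "f a b \<noteq> g a b \<Longrightarrow> f \<noteq> g"
  by auto

theorem lemma2p4:
  shows "bij_betw psi_sharp PsiD PsiD
    \<and> (\<forall>A\<in>PsiD. \<forall>B\<in>PsiD. psi_sharp (psi_add A B) = psi_add (psi_sharp A) (psi_sharp B))
    \<and> (\<forall>c. \<forall>A\<in>PsiD. psi_sharp (psi_smult c A) = psi_smult c (psi_sharp A))
    \<and> (\<forall>A\<in>PsiD. \<forall>B\<in>PsiD. psi_sharp (psi_mult A B) = psi_mult (psi_sharp A) (psi_sharp B))
    \<and> psi_sharp psi_one = psi_one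
    \<and> (\<forall>D\<in>PsiD. (psi_sharp ^^ 4) D = D)
    \<and> (\<forall>n\<in>{1,2,3::nat}. \<exists>D\<in>PsiD. (psi_sharp ^^ n) D \<noteq> D)"
proof (intro conjI ballI allI)
  show "bij_betw psi_sharp PsiD PsiD"
  proof (rule bij_betw_byWitness[where f'="\<lambda>C. psi_sharp (psi_sharp (psi_sharp C))"])
    show "\<forall>a\<in>PsiD. psi_sharp (psi_sharp (psi_sharp (psi_sharp a))) = a" using sharp4 by blast
    show "\<forall>a'\<in>PsiD. psi_sharp (psi_sharp (psi_sharp (psi_sharp a'))) = a'" using sharp4 by blast
    show "psi_sharp ` PsiD \<subseteq> PsiD" using sharp_closed by blast
    show "(\<lambda>C. psi_sharp (psi_sharp (psi_sharp C))) ` PsiD \<subseteq> PsiD" using sharp_closed by blast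
  qed
next
  fix A B assume "A \<in> PsiD" "B \<in> PsiD"
  then show "psi_sharp (psi_add A B) = psi_add (psi_sharp A) (psi_sharp B)" by (rule sharp_add)
next
  fix c A assume "A \<in> PsiD"
  then show "psi_sharp (psi_smult c A) = psi_smult c (psi_sharp A)" by (rule sharp_smult)
next
  fix A B assume "A \<in> PsiD" "B \<in> PsiD"
  then show "psi_sharp (psi_mult A B) = psi_mult (psi_sharp A) (psi_sharp B)" by (rule sharp_mult)
next
  show "psi_sharp psi_one = psi_one" by (rule sharp_one)
next
  fix D assume "D \<in> PsiD"
  then show "(psi_sharp ^^ 4) D = D" using sharp4 by (simp add: numeral_eq_Suc)
next
  fix n :: nat assume n: "n \<in> {1,2,3}"
  define X :: psi where "X = (\<lambda>k m. if k = 1 \<and> m = 0 then 1 else 0)"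
  have X: "X \<in> PsiD" by (rule PsiD_intro[of _ 1 0]) (auto simp: X_def split: if_splits)
  have X10: "X 1 0 = 1" by (simp add: X_def)
  have s1: "psi_sharp X 1 0 = 0" by (rule sharp_10) (auto simp: X_def split: if_splits)
  have s2: "psi_sharp (psi_sharp X) 1 0 = -1" by (simp add: sharp2[OF X] X10 sg_def)
  have s3: "psi_sharp (psi_sharp (psi_sharp X)) 1 0 = 0"
  proof -
    have "psi_sharp (psi_sharp X) = (\<lambda>k m. sg (k+m) * X k m)" by (rule sharp2_fun[OF X])
    then have "psi_sharp (psi_sharp (psi_sharp X)) 1 0 = psi_sharp (\<lambda>k m. sg (k+m) * X k m) 1 0" by simp
    also have "\<dots> = 0" by (rule sharp_10) (auto simp: X_def split: if_splits)
    finally show ?thesis .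
  qed
  show "\<exists>D\<in>PsiD. (psi_sharp ^^ n) D \<noteq> D"
  proof (rule bexI[OF _ X])
    from n consider "n = 1" | "n = 2" | "n = 3" by auto
    then show "(psi_sharp ^^ n) X \<noteq> X"
    proof cases
      case 1 then have "(psi_sharp ^^ n) X 1 0 \<noteq> X 1 0" using s1 X10 by simp
      then show ?thesis by (rule neq_at)
    next
      case 2 then have "(psi_sharp ^^ n) X 1 0 \<noteq> X 1 0" using s2 X10 by (simp add: numeral_eq_Suc)
      then show ?thesis by (rule neq_at)
    next
      case 3 then have "(psi_sharp ^^ n) X 1 0 \<noteq> X 1 0" using s3 X10 by (simp add: numeral_eq_Suc)
      then show ?thesis by (rule neq_at)
    qed
  qed
qed

end
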